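(* If $\sigma$ is a subgame perfect equilibrium in $(\mathcal{X},x_0)$, then $\Lambda^*(v)\neq\emptyset$ for every vertex $v$ of $X$ reachable from $x_0$, and $\langle\sigma\rangle_{x_0}\in\Lambda^*(x_0)$.
   Context: Games: an arena $G=(\Pi,V,(V_i)_{i\in\Pi},E)$ has finite player set $\Pi$, finite vertex set $V$ ($|V|\ge2$, $|\Pi|\le|V|$), partition $(V_i)$ and edges $E$ with every vertex having a successor. A quantitative reachability game has targets $F_i\subseteq V$ and $\mathrm{Cost}_i(\rho)=$ least $k$ with $\rho_k\in F_i$ (or $+\infty$). Strategies map histories ending in $V_i$ to successors; a profile $\sigma$ has outcome $\langle\sigma\rangle_{v_0}$. $\sigma$ is a Nash equilibrium if no player can strictly decrease his cost of the outcome by unilaterally changing his strategy; it is a subgame perfect equilibrium if for every history $hv$ from the initial vertex, $\sigma_{|h}$ ($\sigma_{i|h}(h')=\sigma_i(hh')$) is a Nash equilibrium in the game from $v$ with costs $\rho\mapsto\mathrm{Cost}_i(h\rho)$. Extended game of $(\mathcal{G},v_0)$: $\mathcal{X}$ is the reachability game on arena $X$ with $V^X=V\times2^\Pi$, $((v,I),(v',I'))\in E^X$ iff $(v,v')\in E$ and $I'=I\cup\{i:v'\in F_i\}$, $(v,I)\in V^X_i$ iff $v\in V_i$, targets $F^X_i=\{(v,I):i\in I\}$; $x_0=(v_0,\{i:v_0\in F_i\})$. $I(u)$ is the second component of $u$. $\mathcal{I}$ is the set of $I$ with some $(v,I)$ reachable from $x_0$, $N=|\mathcal{I}|$, and $J_1<\dots<J_N$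 a fixed total order of $\mathcal{I}$ extending $I<I'$ iff $I\ne I'$ and some $(v',I')$ is reachable from some $(v,I)$. $V^{\ge J_n}=\{(v,J_m):v\in V,m\ge n\}$. Labelings: for $\lambda:V^X\to\mathbb{N}\cup\{+\infty\}$, a play $\rho$ of $X$ is $\lambda$-consistent if $\mathrm{Cost}_i(\rho_{\ge n})\le\lambda(\rho_n)$ for all $n$ and $i$ with $\rho_n\in V^X_i$. $\lambda^0(u)=0$ if $u\in V^X_i$ and $i\in I(u)$, else $+\infty$. The update of $\lambda^k$ w.r.t. $V^{\ge J_n}$ keeps values outside $V^{\ge J_n}$ and for $u\in V^{\ge J_n}\cap V^X_i$ sets $\lambda^{k+1}(u)=0$ if $i\in I(u)$, otherwise $1+\min_{(u,u')\in E^X}\sup\{\mathrm{Cost}_i(\rho):\rho\in\Lambda^k(u')\}$, $\Lambda^k(u')$ being the $\lambda^k$-consistent plays from $u'$ and $1+(+\infty)=+\infty$. The sequence is generated by $n_0=N$, $\lambda^{k+1}=$ update of $\lambda^k$ w.r.t. $V^{\ge J_{n_k}}$, $n_{k+1}=n_k-1$ if $\lambda^{k+1}=\lambda^k$ and $n_k>1$, else $n_{k+1}=n_k$. It eventually becomes constant, equal to $\lambda^*$; $\Lambda^*(v)$ is the set of $\lambda^*$-consistent plays from $v$. *)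

theory Defs
  imports Main "HOL-Library.Extended_Nat"
begin

text \<open>An arena is given by a vertex set V, an edge relation E, an owner map own
(vertex v belongs to V_i iff own v = i) and a player set P.
Plays are infinite sequences (nat => 'a), histories are non-empty finite paths (lists).\<close>

definition is_play :: "'a set \<Rightarrow> ('a \<times> 'a) set \<Rightarrow> (nat \<Rightarrow> 'a) \<Rightarrow> bool" where
  "is_play V E \<rho> \<longleftrightarrow> (\<forall>n. \<rho> n \<in> V \<and> (\<rho> n, \<rho> (Suc n)) \<in> E)"

definition is_history :: "'a set \<Rightarrow> ('a \<times> 'a) set \<Rightarrow> 'a list \<Rightarrow> bool" where
  "is_history V E h \<longleftrightarrow> h \<noteq> [] \<and> set h \<subseteq> V \<and> (\<forall>k. Suc k < length h \<longrightarrow> (h ! k, h ! Suc k) \<in> E)"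

definition cost :: "'a set \<Rightarrow> (nat \<Rightarrow> 'a) \<Rightarrow> enat" where
  "cost T \<rho> = (if \<exists>k. \<rho> k \<in> T then enat (LEAST k. \<rho> k \<in> T) else \<infinity>)"

definition prepend :: "'a list \<Rightarrow> (nat \<Rightarrow> 'a) \<Rightarrow> nat \<Rightarrow> 'a" where
  "prepend h \<rho> n = (if n < length h then h ! n else \<rho> (n - length h))"

definition is_strategy :: "'a set \<Rightarrow> ('a \<times> 'a) set \<Rightarrow> ('a \<Rightarrow> 'p) \<Rightarrow> 'p \<Rightarrow> ('a list \<Rightarrow> 'a) \<Rightarrow> bool" where
  "is_strategy V E own i s \<longleftrightarrow>
     (\<forall>h. is_history V E h \<and> own (last h) = i \<longrightarrow> (last h, s h) \<in> E)"

fun out_prefix :: "('a \<Rightarrow> 'p) \<Rightarrow> ('p \<Rightarrow> 'a list \<Rightarrow> 'a) \<Rightarrow> 'a \<Rightarrow> nat \<Rightarrow> 'a list" where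
  "out_prefix own \<tau> v 0 = [v]"
| "out_prefix own \<tau> v (Suc n) =
     (let h = out_prefix own \<tau> v n in h @ [\<tau> (own (last h)) h])"

definition outcome :: "('a \<Rightarrow> 'p) \<Rightarrow> ('p \<Rightarrow> 'a list \<Rightarrow> 'a) \<Rightarrow> 'a \<Rightarrow> nat \<Rightarrow> 'a" where
  "outcome own \<tau> v n = last (out_prefix own \<tau> v n)"

definition is_NE :: "'a set \<Rightarrow> ('a \<times> 'a) set \<Rightarrow> ('a \<Rightarrow> 'p) \<Rightarrow> 'p set
    \<Rightarrow> ('p \<Rightarrow> (nat \<Rightarrow> 'a) \<Rightarrow> enat) \<Rightarrow> ('p \<Rightarrow> 'a list \<Rightarrow> 'a) \<Rightarrow> 'a \<Rightarrow> bool" where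
  "is_NE V E own P c \<tau> v \<longleftrightarrow>
     (\<forall>i\<in>P. \<forall>s. is_strategy V E own i s \<longrightarrow>
        c i (outcome own \<tau> v) \<le> c i (outcome own (\<tau>(i := s)) v))"

text \<open>Subgame perfect equilibrium in the reachability game with targets T from x0:
  for every history h v from x0, sigma restricted to h is a NE from v with costs
  rho |-> Cost_i(h rho).\<close>
definition is_SPE :: "'a set \<Rightarrow> ('a \<times> 'a) set \<Rightarrow> ('a \<Rightarrow> 'p) \<Rightarrow> 'p set \<Rightarrow> ('p \<Rightarrow> 'a set)
    \<Rightarrow> ('p \<Rightarrow> 'a list \<Rightarrow> 'a) \<Rightarrow> 'a \<Rightarrow> bool" where
  "is_SPE V E own P T \<sigma> x0 \<longleftrightarrow>
     (\<forall>i\<in>P. is_strategy V E own i (\<sigma> i)) \<and>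
     (\<forall>h v. is_history V E (h @ [v]) \<and> hd (h @ [v]) = x0 \<longrightarrow>
        is_NE V E own P (\<lambda>i \<rho>. cost (T i) (prepend h \<rho>)) (\<lambda>i h'. \<sigma> i (h @ h')) v)"

definition VX :: "'v set \<Rightarrow> 'p set \<Rightarrow> ('v \<times> 'p set) set" where
  "VX V P = V \<times> Pow P"

definition EdgesX :: "'v set \<Rightarrow> ('v \<times> 'v) set \<Rightarrow> 'p set \<Rightarrow> ('p \<Rightarrow> 'v set)
    \<Rightarrow> (('v \<times> 'p set) \<times> ('v \<times> 'p set)) set" where
  "EdgesX V E P F = {(u, u'). fst u \<in> V \<and> snd u \<subseteq> P \<and> (fst u, fst u') \<in> E \<and>
                 snd u' = snd u \<union> {i \<in> P. fst u' \<in> F i}}"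

definition ownX :: "('v \<Rightarrow> 'p) \<Rightarrow> 'v \<times> 'p set \<Rightarrow> 'p" where
  "ownX own u = own (fst u)"

definition FX :: "'v set \<Rightarrow> 'p set \<Rightarrow> 'p \<Rightarrow> ('v \<times> 'p set) set" where
  "FX V P i = {u \<in> VX V P. i \<in> snd u}"

definition x0X :: "'p set \<Rightarrow> ('p \<Rightarrow> 'v set) \<Rightarrow> 'v \<Rightarrow> 'v \<times> 'p set" where
  "x0X P F v0 = (v0, {i \<in> P. v0 \<in> F i})"

definition calI :: "'v set \<Rightarrow> ('v \<times> 'v) set \<Rightarrow> 'p set \<Rightarrow> ('p \<Rightarrow> 'v set) \<Rightarrow> 'v \<Rightarrow> 'p set set" where
  "calI V E P F v0 = {I. \<exists>v. (x0X P F v0, (v, I)) \<in> (EdgesX V E P F)\<^sup>*}"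

text \<open>J enumerates \<I> as J 1 < ... < J N, a total order extending reachability between
  distinct second components.\<close>
definition is_ext_order :: "'v set \<Rightarrow> ('v \<times> 'v) set \<Rightarrow> 'p set \<Rightarrow> ('p \<Rightarrow> 'v set) \<Rightarrow> 'v
    \<Rightarrow> (nat \<Rightarrow> 'p set) \<Rightarrow> bool" where
  "is_ext_order V E P F v0 J \<longleftrightarrow>
     bij_betw J {1..card (calI V E P F v0)} (calI V E P F v0) \<and>
     (\<forall>a\<in>{1..card (calI V E P F v0)}. \<forall>b\<in>{1..card (calI V E P F v0)}.
        J a \<noteq> J b \<and> (\<exists>v v'. v \<in> V \<and> v' \<in> V \<and> ((v, J a), (v', J b)) \<in> (EdgesX V E P F)\<^sup>*)
        \<longrightarrow> a < b)"

definition Vge :: "'v set \<Rightarrow> (nat \<Rightarrow> 'p set) \<Rightarrow> nat \<Rightarrow> nat \<Rightarrow> ('v \<times> 'p set) set" where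
  "Vge V J N n = {(v, J m) | v m. v \<in> V \<and> n \<le> m \<and> m \<le> N}"

definition consistent :: "'v set \<Rightarrow> ('v \<times> 'v) set \<Rightarrow> ('v \<Rightarrow> 'p) \<Rightarrow> 'p set \<Rightarrow> ('p \<Rightarrow> 'v set)
    \<Rightarrow> ('v \<times> 'p set \<Rightarrow> enat) \<Rightarrow> (nat \<Rightarrow> 'v \<times> 'p set) \<Rightarrow> bool" where
  "consistent V E own P F lam \<rho> \<longleftrightarrow>
     is_play (VX V P) (EdgesX V E P F) \<rho> \<and>
     (\<forall>n. cost (FX V P (ownX own (\<rho> n))) (\<lambda>k. \<rho> (n + k)) \<le> lam (\<rho> n))"

definition Lam :: "'v set \<Rightarrow> ('v \<times> 'v) set \<Rightarrow> ('v \<Rightarrow> 'p) \<Rightarrow> 'p set \<Rightarrow> ('p \<Rightarrow> 'v set)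
    \<Rightarrow> ('v \<times> 'p set \<Rightarrow> enat) \<Rightarrow> 'v \<times> 'p set \<Rightarrow> (nat \<Rightarrow> 'v \<times> 'p set) set" where
  "Lam V E own P F lam u = {\<rho>. consistent V E own P F lam \<rho> \<and> \<rho> 0 = u}"

definition lambda0 :: "('v \<Rightarrow> 'p) \<Rightarrow> 'v \<times> 'p set \<Rightarrow> enat" where
  "lambda0 own u = (if ownX own u \<in> snd u then 0 else \<infinity>)"

definition update_lab :: "'v set \<Rightarrow> ('v \<times> 'v) set \<Rightarrow> ('v \<Rightarrow> 'p) \<Rightarrow> 'p set \<Rightarrow> ('p \<Rightarrow> 'v set)
    \<Rightarrow> (nat \<Rightarrow> 'p set) \<Rightarrow> nat \<Rightarrow> ('v \<times> 'p set \<Rightarrow> enat) \<Rightarrow> nat \<Rightarrow> 'v \<times> 'p set \<Rightarrow> enat" where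
  "update_lab V E own P F J N lam n u =
     (if u \<in> Vge V J N n then
        (if ownX own u \<in> snd u then 0
         else 1 + (INF u'\<in>{u'. (u, u') \<in> EdgesX V E P F}.
                     SUP \<rho>\<in>Lam V E own P F lam u'. cost (FX V P (ownX own u)) \<rho>))
      else lam u)"

fun lab_seq :: "'v set \<Rightarrow> ('v \<times> 'v) set \<Rightarrow> ('v \<Rightarrow> 'p) \<Rightarrow> 'p set \<Rightarrow> ('p \<Rightarrow> 'v set)
    \<Rightarrow> (nat \<Rightarrow> 'p set) \<Rightarrow> nat \<Rightarrow> nat \<Rightarrow> ('v \<times> 'p set \<Rightarrow> enat) \<times> nat" where
  "lab_seq V E own P F J N 0 = (lambda0 own, N)"
| "lab_seq V E own P F J N (Suc k) =
     (let (lam, n) = lab_seq V E own P F J N k;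
          lam' = update_lab V E own P F J N lam n
      in (lam', if lam' = lam \<and> n > 1 then n - 1 else n))"

definition lambda_star :: "'v set \<Rightarrow> ('v \<times> 'v) set \<Rightarrow> ('v \<Rightarrow> 'p) \<Rightarrow> 'p set \<Rightarrow> ('p \<Rightarrow> 'v set)
    \<Rightarrow> (nat \<Rightarrow> 'p set) \<Rightarrow> nat \<Rightarrow> 'v \<times> 'p set \<Rightarrow> enat" where
  "lambda_star V E own P F J N =
     (THE l. \<exists>K. \<forall>k\<ge>K. fst (lab_seq V E own P F J N k) = l)"

definition Lam_star :: "'v set \<Rightarrow> ('v \<times> 'v) set \<Rightarrow> ('v \<Rightarrow> 'p) \<Rightarrow> 'p set \<Rightarrow> ('p \<Rightarrow> 'v set)
    \<Rightarrow> (nat \<Rightarrow> 'p set) \<Rightarrow> nat \<Rightarrow> 'v \<times> 'p set \<Rightarrow> (nat \<Rightarrow> 'v \<times> 'p set) set" where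
  "Lam_star V E own P F J N u = Lam V E own P F (lambda_star V E own P F J N) u"

end

theory Submission
  imports Defs
begin


lemma is_history_succ:
  "is_history V E h \<longleftrightarrow> h \<noteq> [] \<and> set h \<subseteq> V \<and> successively (\<lambda>x y. (x,y) \<in> E) h"
  unfolding is_history_def successively_conv_nth by blast

lemma out_prefix_len: "length (out_prefix ow \<tau> v n) = Suc n"
  by (induction n) (auto simp: Let_def)

lemma out_prefix_map: "out_prefix ow \<tau> v n = map (outcome ow \<tau> v) [0..<Suc n]"
proof (induction n)
  case 0
  then show ?case by (simp add: outcome_def)
next
  case (Suc n)
  have "outcome ow \<tau> v (Suc n) = \<tau> (ow (last (out_prefix ow \<tau> v n))) (out_prefix ow \<tau> v n)"
    by (simp add: outcome_def Let_def)
  then show ?case using Suc by (simp add: Let_def)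
qed

lemma outcome_Suc: "outcome ow \<tau> v (Suc n) = \<tau> (ow (outcome ow \<tau> v n)) (map (outcome ow \<tau> v) [0..<Suc n])"
proof -
  have "outcome ow \<tau> v (Suc n) = \<tau> (ow (last (out_prefix ow \<tau> v n))) (out_prefix ow \<tau> v n)"
    by (simp add: outcome_def Let_def)
  note eq = this
  have a: "map (outcome ow \<tau> v) [0..<Suc n] = out_prefix ow \<tau> v n" by (rule out_prefix_map[symmetric])
  have b: "outcome ow \<tau> v n = last (out_prefix ow \<tau> v n)" by (simp add: outcome_def)
  show ?thesis using eq unfolding a b .
qed

lemma outcome_0: "outcome ow \<tau> v 0 = v"
  by (simp add: outcome_def)

lemma out_prefix_history:
  assumes "v \<in> VV" "EE \<subseteq> VV \<times> VV"
    and good: "\<And>h'. is_history VV EE h' \<Longrightarrow> hd h' = v \<Longrightarrow> (last h', \<tau> (ow (last h')) h') \<in> EE"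
  shows "is_history VV EE (out_prefix ow \<tau> v n)"
proof (induction n)
  case 0
  then show ?case using assms(1) by (simp add: is_history_succ)
next
  case (Suc n)
  let ?h = "out_prefix ow \<tau> v n"
  have hd: "hd ?h = v" using out_prefix_map[of ow \<tau> v n] by (simp add: outcome_0 hd_map upt_rec)
  have e: "(last ?h, \<tau> (ow (last ?h)) ?h) \<in> EE" using good Suc hd by blast
  then show ?case using Suc assms(2) by (auto simp: is_history_succ Let_def successively_append_iff)
qed

lemma outcome_play:
  assumes "v \<in> VV" "EE \<subseteq> VV \<times> VV"
    and good: "\<And>h'. is_history VV EE h' \<Longrightarrow> hd h' = v \<Longrightarrow> (last h', \<tau> (ow (last h')) h') \<in> EE"
  shows "is_play VV EE (outcome ow \<tau> v)"
  unfolding is_play_def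
proof
  fix n
  have "is_history VV EE (out_prefix ow \<tau> v (Suc n))" using out_prefix_history[OF assms(1,2)] good by blast
  then have "successively (\<lambda>x y. (x,y) \<in> EE) (map (outcome ow \<tau> v) [0..<Suc (Suc n)])"
     and "set (map (outcome ow \<tau> v) [0..<Suc (Suc n)]) \<subseteq> VV"
    by (auto simp: is_history_succ out_prefix_map)
  then show "outcome ow \<tau> v n \<in> VV \<and> (outcome ow \<tau> v n, outcome ow \<tau> v (Suc n)) \<in> EE"
    by (auto simp: successively_append_iff)
qed

lemma outcome_shift:
  "outcome ow \<tau> v (m + n) =
   outcome ow (\<lambda>x h'. \<tau> x (map (outcome ow \<tau> v) [0..<m] @ h')) (outcome ow \<tau> v m) n"
proof -
  let ?pre = "map (outcome ow \<tau> v) [0..<m]"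
  let ?t = "\<lambda>x h'. \<tau> x (?pre @ h')"
  have "out_prefix ow ?t (outcome ow \<tau> v m) n = drop m (out_prefix ow \<tau> v (m + n))"
  proof (induction n)
    case 0
    then show ?case by (simp add: out_prefix_map outcome_0)
  next
    case (Suc n)
    have d: "drop m (out_prefix ow \<tau> v (m + n)) \<noteq> []" by (simp add: out_prefix_len)
    have p: "?pre @ drop m (out_prefix ow \<tau> v (m + n)) = out_prefix ow \<tau> v (m + n)"
    proof -
      have "take m (out_prefix ow \<tau> v (m + n)) = ?pre" by (simp add: out_prefix_map take_map)
      then show ?thesis by (metis append_take_drop_id)
    qed
    show ?case using Suc d p by (simp add: Let_def out_prefix_len)
  qed
  then have "outcome ow ?t (outcome ow \<tau> v m) n = last (drop m (out_prefix ow \<tau> v (m + n)))"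
    unfolding outcome_def by simp
  also have "\<dots> = outcome ow \<tau> v (m + n)" unfolding outcome_def
    by (simp add: out_prefix_len last_drop)
  finally show ?thesis by simp
qed

lemma out_prefix_dev:
  assumes "\<tau>1 (ow u) [u] = u'"
    and "\<And>n. \<tau>1 (ow (last (out_prefix ow \<tau>2 u' n))) (u # out_prefix ow \<tau>2 u' n)
              = \<tau>2 (ow (last (out_prefix ow \<tau>2 u' n))) (out_prefix ow \<tau>2 u' n)"
  shows "out_prefix ow \<tau>1 u (Suc n) = u # out_prefix ow \<tau>2 u' n"
proof (induction n)
  case 0
  then show ?case using assms(1) by simp
next
  case (Suc n)
  have ne: "out_prefix ow \<tau>2 u' n \<noteq> []" using out_prefix_len[of ow \<tau>2 u' n] by auto
  have "out_prefix ow \<tau>1 u (Suc (Suc n)) = out_prefix ow \<tau>1 u (Suc n) @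
     [\<tau>1 (ow (last (out_prefix ow \<tau>1 u (Suc n)))) (out_prefix ow \<tau>1 u (Suc n))]"
    by (simp add: Let_def)
  also have "\<dots> = u # out_prefix ow \<tau>2 u' (Suc n)"
    using Suc ne assms(2)[of n] by (simp add: Let_def)
  finally show ?case .
qed

lemma outcome_dev:
  assumes "\<tau>1 (ow u) [u] = u'"
    and "\<And>n. \<tau>1 (ow (last (out_prefix ow \<tau>2 u' n))) (u # out_prefix ow \<tau>2 u' n)
              = \<tau>2 (ow (last (out_prefix ow \<tau>2 u' n))) (out_prefix ow \<tau>2 u' n)"
  shows "outcome ow \<tau>1 u = prepend [u] (outcome ow \<tau>2 u')"
proof
  fix n show "outcome ow \<tau>1 u n = prepend [u] (outcome ow \<tau>2 u') n"
  proof (cases n)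
    case 0
    then show ?thesis by (simp add: outcome_0 prepend_def)
  next
    case (Suc m)
    have ne: "out_prefix ow \<tau>2 u' m \<noteq> []" using out_prefix_len[of ow \<tau>2 u' m] by auto
    show ?thesis using Suc out_prefix_dev[OF assms, of m] ne by (simp add: outcome_def prepend_def)
  qed
qed

lemma cost_prepend:
  assumes "\<forall>x\<in>set h. x \<notin> T"
  shows "cost T (prepend h \<rho>) = enat (length h) + cost T \<rho>"
proof (cases "\<exists>k. \<rho> k \<in> T")
  case True
  let ?k0 = "LEAST k. \<rho> k \<in> T"
  have k0: "\<rho> ?k0 \<in> T" using True by (rule LeastI_ex)
  have p: "prepend h \<rho> (length h + ?k0) \<in> T" using k0 by (simp add: prepend_def)
  have "(LEAST j. prepend h \<rho> j \<in> T) = length h + ?k0"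
  proof (rule Least_equality)
    show "prepend h \<rho> (length h + ?k0) \<in> T" by (rule p)
  next
    fix j assume j: "prepend h \<rho> j \<in> T"
    have "\<not> j < length h" using j assms by (auto simp: prepend_def)
    then have "\<rho> (j - length h) \<in> T" using j by (simp add: prepend_def)
    then have "?k0 \<le> j - length h" by (rule Least_le)
    then show "length h + ?k0 \<le> j" using \<open>\<not> j < length h\<close> by simp
  qed
  then show ?thesis using True p unfolding cost_def by auto
next
  case False
  have "\<not> (\<exists>j. prepend h \<rho> j \<in> T)"
  proof
    assume "\<exists>j. prepend h \<rho> j \<in> T"
    then obtain j where j: "prepend h \<rho> j \<in> T" by blast
    have "\<not> j < length h" using j assms by (auto simp: prepend_def)
    then have "\<rho> (j - length h) \<in> T" using j by (simp add: prepend_def)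
    then show False using False by blast
  qed
  then show ?thesis using False unfolding cost_def by simp
qed

lemma cost_zero: "\<rho> 0 \<in> T \<Longrightarrow> cost T \<rho> = 0"
  unfolding cost_def by (auto intro!: Least_equality simp: zero_enat_def)

lemma hist_app:
  assumes "is_history V E (h @ [u])" "is_history V E h'" "hd h' = u"
  shows "is_history V E (h @ h')"
  using assms by (cases h') (auto simp: is_history_succ successively_append_iff)

lemma hd_app: "xs \<noteq> [] \<Longrightarrow> hd xs = u \<Longrightarrow> hd (h @ xs) = hd (h @ [u])"
  by (cases h) auto

lemma Inf_enat_in: "A \<noteq> {} \<Longrightarrow> Inf (A::enat set) \<in> A"
  unfolding Inf_enat_def by (auto intro: LeastI)

lemma stab_point:
  fixes f :: "nat \<Rightarrow> enat"
  assumes "\<And>k. f (Suc k) \<le> f k"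
  shows "\<exists>K. \<forall>k\<ge>K. f k = f K"
proof -
  obtain K where K: "f K = (LEAST x. x \<in> range f)"
    by (metis (mono_tags, lifting) LeastI_ex rangeE rangeI)
  have "\<forall>k\<ge>K. f k = f K"
  proof (intro allI impI)
    fix k assume "K \<le> k"
    then have "f k \<le> f K" using lift_Suc_antimono_le[of f, OF assms] by blast
    moreover have "f K \<le> f k" unfolding K by (rule Least_le) simp
    ultimately show "f k = f K" by simp
  qed
  then show ?thesis by blast
qed

lemma stab:
  fixes f :: "nat \<Rightarrow> 'a \<Rightarrow> enat"
  assumes "\<And>k u. f (Suc k) u \<le> f k u" "finite D" "\<And>k u. u \<notin> D \<Longrightarrow> f k u = f 0 u"
  shows "\<exists>K. \<forall>k\<ge>K. f k = f K"
proof -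
  have "\<forall>u. \<exists>K. \<forall>k\<ge>K. f k u = f K u"
  proof
    fix u show "\<exists>K. \<forall>k\<ge>K. f k u = f K u" using stab_point[of "\<lambda>k. f k u"] assms(1) by blast
  qed
  then obtain Kf where Kf: "\<And>u k. k \<ge> Kf u \<Longrightarrow> f k u = f (Kf u) u" by metis
  define K where "K = Max (insert 0 (Kf ` D))"
  have KD: "u \<in> D \<Longrightarrow> Kf u \<le> K" for u unfolding K_def using assms(2) by simp
  have "\<forall>k\<ge>K. f k = f K"
  proof (intro allI impI ext)
    fix k u assume k: "K \<le> k"
    show "f k u = f K u"
    proof (cases "u \<in> D")
      case True
      then show ?thesis using Kf[of u k] Kf[of u K] KD[OF True] k by simp
    next
      case False
      then show ?thesis using assms(3) by metis
    qed
  qed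
  then show ?thesis by blast
qed

lemma rtrancl_hist:
  assumes "(x0, u) \<in> E\<^sup>*" "x0 \<in> V" "E \<subseteq> V \<times> V"
  shows "\<exists>h. is_history V E (h @ [u]) \<and> hd (h @ [u]) = x0"
  using assms(1)
proof (induction rule: rtrancl_induct)
  case base
  then show ?case using assms(2) by (intro exI[of _ "[]"]) (simp add: is_history_succ)
next
  case (step y z)
  then obtain h where h: "is_history V E (h @ [y])" "hd (h @ [y]) = x0" by blast
  have "is_history V E ((h @ [y]) @ [z])" using h(1) step(2) assms(3)
    by (auto simp: is_history_succ successively_append_iff)
  moreover have "hd ((h @ [y]) @ [z]) = x0" using h(2) by (cases h) auto
  ultimately show ?case by blast
qed



definition Gv where
  "Gv V E own P F lam u = 1 + (INF u'\<in>{u'. (u, u') \<in> EdgesX V E P F}.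
                     SUP \<rho>\<in>Lam V E own P F lam u'. cost (FX V P (ownX own u)) \<rho>)"

lemma update_lab_alt: "update_lab V E own P F J N lam n u =
  (if u \<in> Vge V J N n then (if ownX own u \<in> snd u then 0 else Gv V E own P F lam u) else lam u)"
  by (simp add: update_lab_def Gv_def)

lemma Lam_mono: 
  assumes le: "\<And>u. l1 u \<le> l2 u" shows "Lam V E own P F l1 u \<subseteq> Lam V E own P F l2 u"
proof
  fix \<rho> assume "\<rho> \<in> Lam V E own P F l1 u"
  then show "\<rho> \<in> Lam V E own P F l2 u"
    unfolding Lam_def consistent_def using order_trans[OF _ le] by blast
qed

lemma Gv_mono:
  assumes "\<And>u. l1 u \<le> l2 u" shows "Gv V E own P F l1 u \<le> Gv V E own P F l2 u"
  unfolding Gv_def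
proof (rule add_left_mono, rule INF_mono)
  fix m assume m: "m \<in> {u'. (u, u') \<in> EdgesX V E P F}"
  show "\<exists>n\<in>{u'. (u, u') \<in> EdgesX V E P F}.
     (SUP \<rho>\<in>Lam V E own P F l1 n. cost (FX V P (ownX own u)) \<rho>)
     \<le> (SUP \<rho>\<in>Lam V E own P F l2 m. cost (FX V P (ownX own u)) \<rho>)"
    apply (rule bexI[of _ m])
     apply (rule SUP_subset_mono[OF Lam_mono[OF assms] order_refl])
    apply (rule m)
    done
qed

lemma lab_Suc_fst: "fst (lab_seq V E own P F J N (Suc k)) =
   update_lab V E own P F J N (fst (lab_seq V E own P F J N k)) (snd (lab_seq V E own P F J N k))"
  by (simp add: Let_def split: prod.split)

lemma lab_Suc_snd: "snd (lab_seq V E own P F J N (Suc k)) \<le> snd (lab_seq V E own P F J N k)"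
  by (simp add: Let_def split: prod.split)

declare lab_seq.simps(2)[simp del]

lemma Vge_anti: "n \<le> n' \<Longrightarrow> Vge V J N n' \<subseteq> Vge V J N n"
  unfolding Vge_def by force

lemma lab_outside:
  "u \<notin> Vge V J N (snd (lab_seq V E own P F J N k)) \<Longrightarrow> fst (lab_seq V E own P F J N k) u = lambda0 own u"
proof (induction k)
  case 0
  then show ?case by simp
next
  case (Suc k)
  have "u \<notin> Vge V J N (snd (lab_seq V E own P F J N k))"
    using Suc.prems Vge_anti[OF lab_Suc_snd] by blast
  then show ?case using Suc.IH by (simp add: lab_Suc_fst update_lab_alt)
qed

lemma lab_anti: "fst (lab_seq V E own P F J N (Suc k)) u \<le> fst (lab_seq V E own P F J N k) u"
proof (induction k arbitrary: u)
  case 0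
  show ?case by (simp add: lab_Suc_fst[of _ _ _ _ _ _ _ 0] update_lab_alt lambda0_def)
next
  case (Suc k)
  let ?l = "\<lambda>k. fst (lab_seq V E own P F J N k)"
  let ?n = "\<lambda>k. snd (lab_seq V E own P F J N k)"
  show ?case
  proof (cases "u \<in> Vge V J N (?n (Suc k)) \<and> ownX own u \<notin> snd u")
    case False
    then show ?thesis by (auto simp: lab_Suc_fst[of _ _ _ _ _ _ _ "Suc k"] update_lab_alt)
  next
    case True
    have l2: "?l (Suc (Suc k)) u = Gv V E own P F (?l (Suc k)) u"
      using True by (simp add: lab_Suc_fst[of _ _ _ _ _ _ _ "Suc k"] update_lab_alt)
    show ?thesis
    proof (cases "u \<in> Vge V J N (?n k)")
      case True2: True
      have "?l (Suc k) u = Gv V E own P F (?l k) u"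
        using True True2 by (simp add: lab_Suc_fst[of _ _ _ _ _ _ _ k] update_lab_alt)
      then show ?thesis using l2 Gv_mono[of "?l (Suc k)" "?l k"] Suc.IH by simp
    next
      case False
      have "?l (Suc k) u = lambda0 own u"
        using False lab_outside[of u V J N E own P F k] by (simp add: lab_Suc_fst[of _ _ _ _ _ _ _ k] update_lab_alt)
      then show ?thesis using True by (simp add: lambda0_def)
    qed
  qed
qed

lemma Vge_finite: "finite V \<Longrightarrow> finite (Vge V J N 0)"
proof -
  assume "finite V"
  have "Vge V J N 0 \<subseteq> (\<lambda>(v, m). (v, J m)) ` (V \<times> {0..N})" unfolding Vge_def by force
  then show ?thesis using \<open>finite V\<close> finite_subset by blast
qed

lemma lab_stab:
  assumes "finite V"
  shows "\<exists>K. \<forall>k\<ge>K. fst (lab_seq V E own P F J N k) = fst (lab_seq V E own P F J N K)"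
proof (rule stab[of "\<lambda>k. fst (lab_seq V E own P F J N k)" "Vge V J N 0", OF lab_anti Vge_finite[OF assms]])
  fix k u assume "u \<notin> Vge V J N 0"
  then have "u \<notin> Vge V J N (snd (lab_seq V E own P F J N k))" using Vge_anti[of 0] by blast
  then show "fst (lab_seq V E own P F J N k) u = fst (lab_seq V E own P F J N 0) u"
    using lab_outside by simp
qed

lemma lambda_star_eq:
  assumes "finite V"
  shows "\<exists>K. lambda_star V E own P F J N = fst (lab_seq V E own P F J N K)"
proof -
  obtain K where K: "\<forall>k\<ge>K. fst (lab_seq V E own P F J N k) = fst (lab_seq V E own P F J N K)"
    using lab_stab[OF assms] by blast
  have "lambda_star V E own P F J N = fst (lab_seq V E own P F J N K)"
    unfolding lambda_star_def
  proof (rule the_equality)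
    show "\<exists>K'. \<forall>k\<ge>K'. fst (lab_seq V E own P F J N k) = fst (lab_seq V E own P F J N K)" using K by blast
  next
    fix l assume "\<exists>K'. \<forall>k\<ge>K'. fst (lab_seq V E own P F J N k) = l"
    then obtain K' where "\<forall>k\<ge>K'. fst (lab_seq V E own P F J N k) = l" by blast
    then show "l = fst (lab_seq V E own P F J N K)" using K by (metis max.cobounded1 max.cobounded2)
  qed
  then show ?thesis by blast
qed



context
  fixes V :: "'v set" and E :: "('v \<times> 'v) set" and own :: "'v \<Rightarrow> 'p" and P :: "'p set"
    and F :: "'p \<Rightarrow> 'v set" and v0 :: 'v
    and \<sigma> :: "'p \<Rightarrow> ('v \<times> 'p set) list \<Rightarrow> 'v \<times> 'p set"
  assumes ownP: "\<forall>v\<in>V. own v \<in> P" and EV: "E \<subseteq> V \<times> V" and Esucc: "\<forall>v\<in>V. \<exists>v'. (v, v') \<in> E"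
    and spe: "is_SPE (VX V P) (EdgesX V E P F) (ownX own) P (FX V P) \<sigma> (x0X P F v0)"
begin

abbreviation "XV \<equiv> VX V P"
abbreviation "EXX \<equiv> EdgesX V E P F"
abbreviation "ow \<equiv> ownX own"
abbreviation "x0 \<equiv> x0X P F v0"

lemma EX_sub: "EXX \<subseteq> XV \<times> XV"
  using EV unfolding EdgesX_def VX_def by auto

lemma EX_succ: "u \<in> XV \<Longrightarrow> \<exists>u'. (u, u') \<in> EXX"
proof -
  assume u: "u \<in> XV"
  then obtain v' where "(fst u, v') \<in> E" using Esucc unfolding VX_def by auto
  then have "(u, (v', snd u \<union> {i \<in> P. v' \<in> F i})) \<in> EXX" using u unfolding EdgesX_def VX_def by auto
  then show ?thesis by blast
qed

lemma own_in: "u \<in> XV \<Longrightarrow> ow u \<in> P"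
  using ownP unfolding VX_def ownX_def by auto

lemma EX_mono: "(u, u') \<in> EXX \<Longrightarrow> snd u \<subseteq> snd u'"
  unfolding EdgesX_def by auto

lemma succ_snd: "successively (\<lambda>x y. (x, y) \<in> EXX) xs \<Longrightarrow> xs \<noteq> [] \<Longrightarrow> \<forall>x\<in>set xs. snd x \<subseteq> snd (last xs)"
proof (induction xs)
  case Nil
  then show ?case by simp
next
  case (Cons a xs)
  show ?case
  proof (cases xs)
    case Nil
    then show ?thesis by simp
  next
    case (Cons b ys)
    then have "(a, b) \<in> EXX" "successively (\<lambda>x y. (x, y) \<in> EXX) xs" using Cons.prems by auto
    have ih: "\<forall>x\<in>set xs. snd x \<subseteq> snd (last xs)" using Cons.IH \<open>successively (\<lambda>x y. (x, y) \<in> EXX) xs\<close> Cons by simp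
      have "snd a \<subseteq> snd b" using EX_mono \<open>(a, b) \<in> EXX\<close> by blast
      moreover have "snd b \<subseteq> snd (last xs)" using ih Cons by simp
      ultimately have "snd a \<subseteq> snd (last (a # xs))" using Cons by simp
      then show ?thesis using ih Cons by simp
  qed
qed

lemma FX_iff: "u \<in> FX V P i \<longleftrightarrow> u \<in> XV \<and> i \<in> snd u"
  unfolding FX_def by auto

lemma strat: "i \<in> P \<Longrightarrow> is_strategy XV EXX ow i (\<sigma> i)"
  using spe unfolding is_SPE_def by blast

lemma goodsig:
  assumes "is_history XV EXX (h @ [u])" "is_history XV EXX h'" "hd h' = u"
  shows "(last h', \<sigma> (ow (last h')) (h @ h')) \<in> EXX"
proof -
  have hh: "is_history XV EXX (h @ h')" by (rule hist_app[OF assms])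
  have ne: "h' \<noteq> []" using assms(2) by (simp add: is_history_def)
  have "last h' \<in> XV" using assms(2) ne by (auto simp: is_history_def)
  then have "ow (last h') \<in> P" by (rule own_in)
  then have "is_strategy XV EXX ow (ow (last h')) (\<sigma> (ow (last h')))" by (rule strat)
  then have "is_history XV EXX (h @ h') \<and> ow (last (h @ h')) = ow (last h') \<longrightarrow>
     (last (h @ h'), \<sigma> (ow (last h')) (h @ h')) \<in> EXX" unfolding is_strategy_def by blast
  then show ?thesis using hh ne by simp
qed

lemma hist_u: "is_history XV EXX (h @ [u]) \<Longrightarrow> u \<in> XV"
  by (simp add: is_history_def)

lemma out_hist:
  assumes "is_history XV EXX (h @ [u])"
  shows "is_history XV EXX (out_prefix ow (\<lambda>i h'. \<sigma> i (h @ h')) u n)"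
  by (rule out_prefix_history[OF hist_u[OF assms] EX_sub]) (use goodsig[OF assms] in blast)

lemma out_play:
  assumes "is_history XV EXX (h @ [u])"
  shows "is_play XV EXX (outcome ow (\<lambda>i h'. \<sigma> i (h @ h')) u)"
  by (rule outcome_play[OF hist_u[OF assms] EX_sub]) (use goodsig[OF assms] in blast)

lemma hd_out: "hd (out_prefix ow \<tau> u n) = u"
  using out_prefix_map[of ow \<tau> u n] by (simp add: outcome_0 hd_map upt_rec)

lemma B_to_A:
  assumes B: "\<And>h u. is_history XV EXX (h @ [u]) \<Longrightarrow> hd (h @ [u]) = x0 \<Longrightarrow>
      cost (FX V P (ow u)) (outcome ow (\<lambda>i h'. \<sigma> i (h @ h')) u) \<le> lam u"
    and hu: "is_history XV EXX (h @ [u])" "hd (h @ [u]) = x0"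
  shows "outcome ow (\<lambda>i h'. \<sigma> i (h @ h')) u \<in> Lam V E own P F lam u"
  unfolding Lam_def consistent_def
proof (intro CollectI conjI allI)
  let ?\<rho> = "outcome ow (\<lambda>i h'. \<sigma> i (h @ h')) u"
  show "is_play XV EXX ?\<rho>" by (rule out_play[OF hu(1)])
  show "?\<rho> 0 = u" by (simp add: outcome_0)
  fix n
  let ?pre = "map ?\<rho> [0..<n]"
  have sh: "(\<lambda>k. ?\<rho> (n + k)) = outcome ow (\<lambda>i h'. \<sigma> i ((h @ ?pre) @ h')) (?\<rho> n)"
    by (rule ext) (simp add: outcome_shift[of ow _ u n])
  have op: "out_prefix ow (\<lambda>i h'. \<sigma> i (h @ h')) u n = ?pre @ [?\<rho> n]"
    by (simp add: out_prefix_map)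
  have oh: "is_history XV EXX (out_prefix ow (\<lambda>i h'. \<sigma> i (h @ h')) u n)" by (rule out_hist[OF hu(1)])
  have h1: "is_history XV EXX ((h @ ?pre) @ [?\<rho> n])"
    using hist_app[OF hu(1) oh hd_out] op by simp
  have h2: "hd ((h @ ?pre) @ [?\<rho> n]) = x0"
    using hd_app[of "out_prefix ow (\<lambda>i h'. \<sigma> i (h @ h')) u n" u h, OF _ hd_out] op hu(2)
    by (simp add: out_prefix_len)
  show "cost (FX V P (ow (?\<rho> n))) (\<lambda>k. ?\<rho> (n + k)) \<le> lam (?\<rho> n)"
    unfolding sh using B[OF h1 h2] .
qed

lemma A_to_B:
  assumes "\<rho> \<in> Lam V E own P F lam u"
  shows "cost (FX V P (ow u)) \<rho> \<le> lam u"
  proof -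
  have c: "\<forall>n. cost (FX V P (ow (\<rho> n))) (\<lambda>k. \<rho> (n + k)) \<le> lam (\<rho> n)" and r0: "\<rho> 0 = u"
    using assms unfolding Lam_def consistent_def by auto
  have "cost (FX V P (ow (\<rho> 0))) (\<lambda>k. \<rho> (0 + k)) \<le> lam (\<rho> 0)" using c by blast
  then show ?thesis using r0 by simp
qed

lemma B_step:
  assumes A: "\<And>h u. is_history XV EXX (h @ [u]) \<Longrightarrow> hd (h @ [u]) = x0 \<Longrightarrow>
      outcome ow (\<lambda>i h'. \<sigma> i (h @ h')) u \<in> Lam V E own P F lam u"
    and hu: "is_history XV EXX (h @ [u])" "hd (h @ [u]) = x0"
  shows "cost (FX V P (ow u)) (outcome ow (\<lambda>i h'. \<sigma> i (h @ h')) u) \<le> update_lab V E own P F J N lam n u"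
proof -
  let ?\<tau> = "\<lambda>i h'. \<sigma> i (h @ h')"
  let ?\<rho> = "outcome ow ?\<tau> u"
  let ?i = "ow u"
  have uX: "u \<in> XV" by (rule hist_u[OF hu(1)])
  have Bk: "cost (FX V P ?i) ?\<rho> \<le> lam u" by (rule A_to_B[OF A[OF hu]])
  show ?thesis
  proof (cases "u \<in> Vge V J N n \<and> ?i \<notin> snd u")
    case False
    show ?thesis
    proof (cases "u \<in> Vge V J N n")
      case True
      then have "?i \<in> snd u" using False by blast
      then have "?\<rho> 0 \<in> FX V P ?i" using uX by (simp add: outcome_0 FX_iff)
      then show ?thesis by (simp add: cost_zero)
    next
      case False
      then show ?thesis using Bk by (simp add: update_lab_alt)
    qed
  next
    case True
    then have iu: "?i \<notin> snd u" by blast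
    have iP: "?i \<in> P" by (rule own_in[OF uX])
    let ?S = "{u'. (u, u') \<in> EXX}"
    let ?g = "\<lambda>u'. SUP \<rho>\<in>Lam V E own P F lam u'. cost (FX V P ?i) \<rho>"
    have Sne: "?g ` ?S \<noteq> {}" using EX_succ[OF uX] by blast
    have "Inf (?g ` ?S) \<in> ?g ` ?S" by (rule Inf_enat_in[OF Sne])
    then obtain u' where u': "(u, u') \<in> EXX" and gu': "Inf (?g ` ?S) = ?g u'" by auto
    have upd: "update_lab V E own P F J N lam n u = 1 + ?g u'"
      using True gu' by (simp add: update_lab_alt Gv_def)
    have u'X: "u' \<in> XV" using u' EX_sub by blast
    define s where "s h' = (if h' = [u] then u' else if is_history XV EXX (h @ h') then \<sigma> ?i (h @ h')
        else (SOME y. (last h', y) \<in> EXX))" for h'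
    have sstrat: "is_strategy XV EXX ow ?i s"
      unfolding is_strategy_def
    proof (intro allI impI)
      fix h' assume h': "is_history XV EXX h' \<and> ow (last h') = ?i"
      show "(last h', s h') \<in> EXX"
      proof (cases "h' = [u]")
        case True
        then show ?thesis using u' by (simp add: s_def)
      next
        case False
        show ?thesis
        proof (cases "is_history XV EXX (h @ h')")
          case True
          have ne: "h' \<noteq> []" using h' by (simp add: is_history_def)
          have "is_strategy XV EXX ow ?i (\<sigma> ?i)" by (rule strat[OF iP])
          then have "is_history XV EXX (h @ h') \<and> ow (last (h @ h')) = ?i \<longrightarrow> (last (h @ h'), \<sigma> ?i (h @ h')) \<in> EXX"
            unfolding is_strategy_def by blast
          then have "(last (h @ h'), \<sigma> ?i (h @ h')) \<in> EXX"
            using True h' ne by simp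
          then show ?thesis using False True ne by (simp add: s_def)
        next
          case False2: False
          have "last h' \<in> XV" using h' by (auto simp: is_history_def)
          then have "\<exists>y. (last h', y) \<in> EXX" by (rule EX_succ)
          then have "(last h', SOME y. (last h', y) \<in> EXX) \<in> EXX" by (rule someI_ex)
          then show ?thesis using False False2 by (simp add: s_def)
        qed
      qed
    qed
    have NE: "is_NE XV EXX ow P (\<lambda>i \<rho>. cost (FX V P i) (prepend h \<rho>)) ?\<tau> u"
      using spe hu unfolding is_SPE_def by blast
    let ?\<tau>2 = "\<lambda>i h'. \<sigma> i ((h @ [u]) @ h')"
    have hu'1: "is_history XV EXX ((h @ [u]) @ [u'])" using hu(1) u' u'X
      by (auto simp: is_history_succ successively_append_iff)
    have hu'2: "hd ((h @ [u]) @ [u']) = x0" using hu(2) by (cases h) auto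
    have dev: "outcome ow (?\<tau>(?i := s)) u = prepend [u] (outcome ow ?\<tau>2 u')"
    proof (rule outcome_dev)
      show "(?\<tau>(?i := s)) (ow u) [u] = u'" by (simp add: s_def)
    next
      fix m
      let ?q = "out_prefix ow ?\<tau>2 u' m"
      have qh: "is_history XV EXX ?q" by (rule out_hist[OF hu'1])
      have qhd: "hd ?q = u'" by (rule hd_out)
      have qne: "?q \<noteq> []" using out_prefix_len[of ow ?\<tau>2 u' m] by (metis Zero_not_Suc list.size(3))
      have uq: "is_history XV EXX (u # ?q)" using qh qhd qne u' uX
        by (cases ?q) (auto simp: is_history_succ)
      have huq: "is_history XV EXX (h @ u # ?q)" using hist_app[OF hu(1) uq] by simp
      show "(?\<tau>(?i := s)) (ow (last ?q)) (u # ?q) = ?\<tau>2 (ow (last ?q)) ?q"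
        using huq qne by (simp add: s_def)
    qed
    have hnot: "\<forall>x\<in>set h. x \<notin> FX V P ?i"
    proof
      fix x assume x: "x \<in> set h"
      have "successively (\<lambda>x y. (x, y) \<in> EXX) (h @ [u])" using hu(1) by (simp add: is_history_succ)
      then have "snd x \<subseteq> snd u" using succ_snd[of "h @ [u]"] x by auto
      then show "x \<notin> FX V P ?i" using iu by (auto simp: FX_iff)
    qed
    have unot: "\<forall>x\<in>set [u]. x \<notin> FX V P ?i" using iu by (simp add: FX_iff)
    have "cost (FX V P ?i) (prepend h ?\<rho>) \<le> cost (FX V P ?i) (prepend h (outcome ow (?\<tau>(?i := s)) u))"
      using NE iP sstrat unfolding is_NE_def by blast
    then have c1: "cost (FX V P ?i) ?\<rho> \<le> cost (FX V P ?i) (outcome ow (?\<tau>(?i := s)) u)"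
      unfolding cost_prepend[OF hnot] by (simp add: enat_add_left_cancel_le)
    have c2: "cost (FX V P ?i) (outcome ow (?\<tau>(?i := s)) u) = 1 + cost (FX V P ?i) (outcome ow ?\<tau>2 u')"
      unfolding dev cost_prepend[OF unot] by (simp add: one_enat_def)
    have "outcome ow ?\<tau>2 u' \<in> Lam V E own P F lam u'" using A[OF hu'1 hu'2] by simp
    then have c3: "cost (FX V P ?i) (outcome ow ?\<tau>2 u') \<le> ?g u'" by (rule SUP_upper)
    have "cost (FX V P ?i) ?\<rho> \<le> 1 + cost (FX V P ?i) (outcome ow ?\<tau>2 u')" using c1 c2 by simp
    also have "\<dots> \<le> 1 + ?g u'" using c3 by (rule add_left_mono)
    finally have "cost (FX V P ?i) ?\<rho> \<le> 1 + ?g u'" .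
    then show ?thesis using upd by simp
  qed
qed

end



lemma A_all:
  fixes V :: "'v set" and E :: "('v \<times> 'v) set" and own :: "'v \<Rightarrow> 'p" and P :: "'p set"
    and F :: "'p \<Rightarrow> 'v set" and v0 :: 'v
    and \<sigma> :: "'p \<Rightarrow> ('v \<times> 'p set) list \<Rightarrow> 'v \<times> 'p set"
  assumes ownP: "\<forall>v\<in>V. own v \<in> P" and EV: "E \<subseteq> V \<times> V" and Esucc: "\<forall>v\<in>V. \<exists>v'. (v, v') \<in> E"
    and spe: "is_SPE (VX V P) (EdgesX V E P F) (ownX own) P (FX V P) \<sigma> (x0X P F v0)"
  shows "\<forall>h u. is_history (VX V P) (EdgesX V E P F) (h @ [u]) \<and> hd (h @ [u]) = x0X P F v0 \<longrightarrow>
      outcome (ownX own) (\<lambda>i h'. \<sigma> i (h @ h')) u \<in> Lam V E own P F (fst (lab_seq V E own P F J N k)) u"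
proof (induction k)
  case 0
  show ?case
  proof (intro allI impI)
    fix h u assume hu0: "is_history (VX V P) (EdgesX V E P F) (h @ [u]) \<and> hd (h @ [u]) = x0X P F v0"
    show "outcome (ownX own) (\<lambda>i h'. \<sigma> i (h @ h')) u \<in> Lam V E own P F (fst (lab_seq V E own P F J N 0)) u"
    proof (rule B_to_A[OF ownP EV Esucc spe])
      fix h u assume hu: "is_history (VX V P) (EdgesX V E P F) (h @ [u])" "hd (h @ [u]) = x0X P F v0"
      have uX: "u \<in> VX V P" using hu(1) by (simp add: is_history_def)
      show "cost (FX V P (ownX own u)) (outcome (ownX own) (\<lambda>i h'. \<sigma> i (h @ h')) u) \<le> fst (lab_seq V E own P F J N 0) u"
      proof (cases "ownX own u \<in> snd u")
        case True
        then have "outcome (ownX own) (\<lambda>i h'. \<sigma> i (h @ h')) u 0 \<in> FX V P (ownX own u)"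
          using uX by (simp add: outcome_0 FX_def)
        then show ?thesis by (simp add: cost_zero)
      next
        case False
        then show ?thesis by (simp add: lambda0_def)
      qed
    qed (use hu0 in auto)
  qed
next
  case (Suc k)
  show ?case
  proof (intro allI impI)
    fix h u assume hu0: "is_history (VX V P) (EdgesX V E P F) (h @ [u]) \<and> hd (h @ [u]) = x0X P F v0"
    show "outcome (ownX own) (\<lambda>i h'. \<sigma> i (h @ h')) u \<in> Lam V E own P F (fst (lab_seq V E own P F J N (Suc k))) u"
    proof (rule B_to_A[OF ownP EV Esucc spe])
      fix h u assume hu: "is_history (VX V P) (EdgesX V E P F) (h @ [u])" "hd (h @ [u]) = x0X P F v0"
      show "cost (FX V P (ownX own u)) (outcome (ownX own) (\<lambda>i h'. \<sigma> i (h @ h')) u) \<le> fst (lab_seq V E own P F J N (Suc k)) u"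
        unfolding lab_Suc_fst
        by (rule B_step[OF ownP EV Esucc spe _ hu]) (use Suc.IH in blast)
    qed (use hu0 in auto)
  qed
qed

theorem proposition2p13:
  fixes V :: "'v set" and E :: "('v \<times> 'v) set" and own :: "'v \<Rightarrow> 'p" and P :: "'p set"
    and F :: "'p \<Rightarrow> 'v set" and v0 :: 'v and J :: "nat \<Rightarrow> 'p set"
    and \<sigma> :: "'p \<Rightarrow> ('v \<times> 'p set) list \<Rightarrow> 'v \<times> 'p set"
  assumes "finite V" and "finite P" and "card V \<ge> 2" and "card P \<le> card V"
    and "\<forall>v\<in>V. own v \<in> P"
    and "E \<subseteq> V \<times> V" and "\<forall>v\<in>V. \<exists>v'. (v, v') \<in> E"
    and "\<forall>i\<in>P. F i \<subseteq> V"
    and "v0 \<in> V"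
    and "is_ext_order V E P F v0 J"
    and "is_SPE (VX V P) (EdgesX V E P F) (ownX own) P (FX V P) \<sigma> (x0X P F v0)"
  shows "(\<forall>u. (x0X P F v0, u) \<in> (EdgesX V E P F)\<^sup>* \<longrightarrow>
            Lam_star V E own P F J (card (calI V E P F v0)) u \<noteq> {}) \<and>
         outcome (ownX own) \<sigma> (x0X P F v0)
           \<in> Lam_star V E own P F J (card (calI V E P F v0)) (x0X P F v0)"
proof -
  let ?N = "card (calI V E P F v0)"
  obtain K where K: "lambda_star V E own P F J ?N = fst (lab_seq V E own P F J ?N K)"
    using lambda_star_eq[OF assms(1)] by blast
  have LS: "Lam_star V E own P F J ?N u = Lam V E own P F (fst (lab_seq V E own P F J ?N K)) u" for u
    unfolding Lam_star_def K ..
  note AK = A_all[OF assms(5,6,7,11), where J=J and N="?N" and k=K]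
  have x0X: "x0X P F v0 \<in> VX V P" using assms(9) unfolding x0X_def VX_def by auto
  have sub: "EdgesX V E P F \<subseteq> VX V P \<times> VX V P" using assms(6) unfolding EdgesX_def VX_def by auto
  have part1: "Lam_star V E own P F J ?N u \<noteq> {}" if r: "(x0X P F v0, u) \<in> (EdgesX V E P F)\<^sup>*" for u
  proof -
    obtain h where h: "is_history (VX V P) (EdgesX V E P F) (h @ [u])" "hd (h @ [u]) = x0X P F v0"
      using rtrancl_hist[OF r x0X sub] by blast
    then show ?thesis using AK[THEN spec, of h, THEN spec, of u] LS by blast
  qed
  have "is_history (VX V P) (EdgesX V E P F) ([] @ [x0X P F v0])" using x0X by (simp add: is_history_def)
  then have "outcome (ownX own) (\<lambda>i h'. \<sigma> i ([] @ h')) (x0X P F v0) \<in> Lam V E own P F (fst (lab_seq V E own P F J ?N K)) (x0X P F v0)"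
    using AK[THEN spec, of "[]", THEN spec, of "x0X P F v0"] by simp
  then have "outcome (ownX own) (\<lambda>i h'. \<sigma> i ([] @ h')) (x0X P F v0) \<in> Lam_star V E own P F J ?N (x0X P F v0)"
    using LS by simp
  then have "outcome (ownX own) \<sigma> (x0X P F v0) \<in> Lam_star V E own P F J ?N (x0X P F v0)" by simp
  then show ?thesis using part1 by blast
qed


end
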